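(* For every choice of parameters, the Data Revocation Game has at least one pure-strategy Nash equilibrium. Moreover, there exist parameter choices for which it has more than one pure-strategy Nash equilibrium.
   Context: Data Revocation Game: a finite set of users $\mathcal I=\{1,\dots,I\}$, $I\ge 2$. Each user $i$ has parameters $d_i^{\max}>0$, $\epsilon_i>0$, $\xi_i>0$, $\ell_i>0$, $\theta_i\ge 0$. Each user chooses $d_i\in[0,d_i^{\max}]$. Payoff $$U_i(d_i,\boldsymbol{d_{-i}})=\ln\Big(\sum_{j\in\mathcal I}d_j+\epsilon_i\Big)-\xi_i d_i\ell_i-\theta_i d_i\sum_{j\neq i}\Big(1-\frac{d_j}{d_j^{\max}}\Big)\ell_j^2 .$$ A Nash equilibrium is a profile $(d_i^* )$ with $d_i^*\in[0,d_i^{\max}]$ and $U_i(d_i^*,\boldsymbol{d_{-i}^*})\ge U_i(d_i,\boldsymbol{d_{-i}^*})$ for all $i$ and all $d_i\in[0,d_i^{\max}]$. *)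

theory Defs
  imports Complex_Main
begin

text \<open>Users are indexed by 0..<n (n = I). A strategy profile is d :: nat => real;
  only the values at indices < n matter.\<close>

definition valid_params ::
  "nat \<Rightarrow> (nat \<Rightarrow> real) \<Rightarrow> (nat \<Rightarrow> real) \<Rightarrow> (nat \<Rightarrow> real) \<Rightarrow> (nat \<Rightarrow> real) \<Rightarrow> (nat \<Rightarrow> real) \<Rightarrow> bool"
  where "valid_params n dmax eps xi ell theta \<longleftrightarrow>
    (\<forall>i<n. dmax i > 0 \<and> eps i > 0 \<and> xi i > 0 \<and> ell i > 0 \<and> theta i \<ge> 0)"

definition payoff ::
  "nat \<Rightarrow> (nat \<Rightarrow> real) \<Rightarrow> (nat \<Rightarrow> real) \<Rightarrow> (nat \<Rightarrow> real) \<Rightarrow> (nat \<Rightarrow> real) \<Rightarrow> (nat \<Rightarrow> real)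
   \<Rightarrow> nat \<Rightarrow> (nat \<Rightarrow> real) \<Rightarrow> real"
  where "payoff n dmax eps xi ell theta i d =
    ln ((\<Sum>j<n. d j) + eps i) - xi i * d i * ell i
    - theta i * d i * (\<Sum>j\<in>{..<n} - {i}. (1 - d j / dmax j) * (ell j)\<^sup>2)"

definition nash_eq ::
  "nat \<Rightarrow> (nat \<Rightarrow> real) \<Rightarrow> (nat \<Rightarrow> real) \<Rightarrow> (nat \<Rightarrow> real) \<Rightarrow> (nat \<Rightarrow> real) \<Rightarrow> (nat \<Rightarrow> real)
   \<Rightarrow> (nat \<Rightarrow> real) \<Rightarrow> bool"
  where "nash_eq n dmax eps xi ell theta d \<longleftrightarrow>
    (\<forall>i<n. d i \<in> {0..dmax i}) \<and>
    (\<forall>i<n. \<forall>x\<in>{0..dmax i}.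
        payoff n dmax eps xi ell theta i d \<ge> payoff n dmax eps xi ell theta i (d(i := x)))"

end

theory Submission imports Defs "HOL-Analysis.Brouwer_Fixpoint" begin

lemma kuhn_approx:
  fixes f :: "(nat\<Rightarrow>real) \<Rightarrow> nat \<Rightarrow> real" and p :: nat
  assumes fC: "\<And>x i. (\<forall>j<n. 0 \<le> x j \<and> x j \<le> 1) \<Longrightarrow> i<n \<Longrightarrow> 0 \<le> f x i \<and> f x i \<le> 1"
    and p: "0<p"
  shows "\<exists>z. (\<forall>j<n. 0 \<le> z j \<and> z j \<le> 1) \<and> (\<forall>i<n. \<exists>u v. (\<forall>j<n. 0 \<le> u j \<and> u j \<le> 1 \<and> 0 \<le> v j \<and> v j \<le> 1
        \<and> \<bar>u j - z j\<bar> \<le> 1/p \<and> \<bar>v j - z j\<bar> \<le> 1/p) \<and> u i \<le> f u i \<and> f v i \<le> v i)"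
proof -
  define g where "g y = (\<lambda>j. real (y j) / real p)" for y :: "nat\<Rightarrow>nat"
  define label where "label y i = (if g y i = 1 \<or> f (g y) i < g y i then 1 else (0::nat))" for y i
  have inC: "\<forall>j<n. 0 \<le> g y j \<and> g y j \<le> 1" if "\<forall>i<n. y i \<le> p" for y
    using that p by (auto simp: g_def divide_le_eq_1)
  have h1: "\<forall>x. (\<forall>i<n. x i \<le> p) \<longrightarrow> (\<forall>i<n. label x i = (0::nat) \<or> label x i = 1)"
    by (auto simp: label_def)
  have h2: "\<forall>x. (\<forall>i<n. x i \<le> p) \<longrightarrow> (\<forall>i<n. x i = 0 \<longrightarrow> label x i = 0)"
  proof (intro allI impI)
    fix x i assume a: "\<forall>i<n. x i \<le> p" "i<n" "x i = 0"
    have "0 \<le> f (g x) i" using fC[OF inC[OF a(1)] a(2)] by simp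
    then show "label x i = 0" using a by (simp add: label_def g_def)
  qed
  have h3: "\<forall>x. (\<forall>i<n. x i \<le> p) \<longrightarrow> (\<forall>i<n. x i = p \<longrightarrow> label x i = 1)"
    using p by (auto simp: label_def g_def)
  obtain q where q1: "\<forall>i<n. q i < p"
    and q2: "\<forall>i<n. \<exists>r s. (\<forall>j<n. q j \<le> r j \<and> r j \<le> q j + 1) \<and> (\<forall>j<n. q j \<le> s j \<and> s j \<le> q j + 1) \<and> label r i \<noteq> label s i"
    using kuhn_lemma[OF p h1 h2 h3] by blast
  have close: "\<bar>g r j - g q j\<bar> \<le> 1/p" if "q j \<le> r j" "r j \<le> q j + 1" for r j
  proof -
    have "g r j - g q j = (real (r j) - real (q j)) / p" by (simp add: g_def diff_divide_distrib)
    moreover have "0 \<le> real (r j) - real (q j)" "real (r j) - real (q j) \<le> 1" using that by auto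
    ultimately show ?thesis using p by (auto simp: divide_right_mono)
  qed
  have le_p: "\<forall>j<n. r j \<le> p" if "\<forall>j<n. q j \<le> r j \<and> r j \<le> q j + 1" for r
    using that q1 by (metis Suc_eq_plus1 Suc_leI le_trans)
  have lab0: "g y i \<le> f (g y) i" if "label y i = 0" for y i
    using that by (auto simp: label_def split: if_splits)
  have lab1: "f (g y) i \<le> g y i" if "label y i \<noteq> 0" "\<forall>j<n. y j \<le> p" "i<n" for y i
    using that fC[OF inC[OF that(2)] that(3)] by (auto simp: label_def split: if_splits)
  have Z: "\<forall>j<n. 0 \<le> g q j \<and> g q j \<le> 1" using inC q1 by (simp add: less_imp_le)
  have W: "\<forall>i<n. \<exists>u v. (\<forall>j<n. 0 \<le> u j \<and> u j \<le> 1 \<and> 0 \<le> v j \<and> v j \<le> 1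
        \<and> \<bar>u j - g q j\<bar> \<le> 1/p \<and> \<bar>v j - g q j\<bar> \<le> 1/p) \<and> u i \<le> f u i \<and> f v i \<le> v i"
  proof (intro allI impI)
    fix i assume i: "i<n"
    obtain r s where rs: "\<forall>j<n. q j \<le> r j \<and> r j \<le> q j + 1" "\<forall>j<n. q j \<le> s j \<and> s j \<le> q j + 1"
      "label r i \<noteq> label s i" using q2 i by blast
    have C: "\<forall>j<n. 0 \<le> g r j \<and> g r j \<le> 1 \<and> 0 \<le> g s j \<and> g s j \<le> 1
        \<and> \<bar>g r j - g q j\<bar> \<le> 1/p \<and> \<bar>g s j - g q j\<bar> \<le> 1/p \<and> \<bar>g s j - g q j\<bar> \<le> 1/p"
      using inC[OF le_p[OF rs(1)]] inC[OF le_p[OF rs(2)]] close rs by blast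
    show "\<exists>u v. (\<forall>j<n. 0 \<le> u j \<and> u j \<le> 1 \<and> 0 \<le> v j \<and> v j \<le> 1
        \<and> \<bar>u j - g q j\<bar> \<le> 1/p \<and> \<bar>v j - g q j\<bar> \<le> 1/p) \<and> u i \<le> f u i \<and> f v i \<le> v i"
    proof (cases "label r i = 0")
      case True
      then have "label s i \<noteq> 0" using rs by simp
      then show ?thesis using C lab0[OF True] lab1[OF _ le_p[OF rs(2)] i]
        by (intro exI[of _ "g r"] exI[of _ "g s"]) auto
    next
      case False
      then have "label s i = 0" using rs h1 le_p[OF rs(2)] i le_p[OF rs(1)] by metis
      then show ?thesis using C lab0 lab1[OF False le_p[OF rs(1)] i]
        by (intro exI[of _ "g s"] exI[of _ "g r"]) auto
    qed
  qed
  show ?thesis using Z W by blast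
qed

lemma subseq_conv:
  fixes X :: "nat \<Rightarrow> nat \<Rightarrow> real"
  assumes B: "\<forall>k. \<forall>j<n. 0 \<le> X k j \<and> X k j \<le> 1"
  shows "m \<le> n \<Longrightarrow> \<exists>\<sigma>. strict_mono \<sigma> \<and> (\<forall>j<m. convergent (\<lambda>k. X (\<sigma> k) j))"
proof (induction m)
  case 0
  show ?case by (rule exI[of _ id]) (auto simp: strict_mono_def)
next
  case (Suc m)
  then obtain \<sigma> where s: "strict_mono \<sigma>" "\<forall>j<m. convergent (\<lambda>k. X (\<sigma> k) j)" by auto
  have mn: "m < n" using Suc by simp
  have "Bseq (\<lambda>k. X (\<sigma> k) m)"
    using B mn by (intro BseqI'[of _ 1]) auto
  moreover obtain \<tau> where t: "strict_mono \<tau>" "monoseq (\<lambda>k. X (\<sigma> (\<tau> k)) m)"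
    using seq_monosub[of "\<lambda>k. X (\<sigma> k) m"] by auto
  ultimately have c: "convergent (\<lambda>k. X (\<sigma> (\<tau> k)) m)"
    using Bseq_subseq Bseq_monoseq_convergent by blast
  have "convergent (\<lambda>k. X (\<sigma> (\<tau> k)) j)" if "j < Suc m" for j
  proof (cases "j = m")
    case True then show ?thesis using c by simp
  next
    case False
    then have "convergent (\<lambda>k. X (\<sigma> k) j)" using s that by auto
    then have "(\<lambda>k. X (\<sigma> k) j) \<longlonglongrightarrow> lim (\<lambda>k. X (\<sigma> k) j)" by (simp add: convergent_LIMSEQ_iff)
    from LIMSEQ_subseq_LIMSEQ[OF this t(1)] show ?thesis
      by (auto simp: convergent_def o_def)
  qed
  then show ?case using strict_mono_o[OF s(1) t(1)] by (intro exI[of _ "\<sigma> \<circ> \<tau>"]) (auto simp: o_def)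
qed

lemma brouwer_nat:
  fixes f :: "(nat\<Rightarrow>real) \<Rightarrow> nat \<Rightarrow> real"
  assumes fC: "\<And>x i. (\<forall>j<n. 0 \<le> x j \<and> x j \<le> 1) \<Longrightarrow> i<n \<Longrightarrow> 0 \<le> f x i \<and> f x i \<le> 1"
    and cont: "\<And>x z i. (\<forall>k. \<forall>j<n. 0 \<le> x k j \<and> x k j \<le> 1) \<Longrightarrow> (\<forall>j<n. 0 \<le> z j \<and> z j \<le> 1)
       \<Longrightarrow> (\<forall>j<n. (\<lambda>k. x k j) \<longlonglongrightarrow> z j) \<Longrightarrow> i<n \<Longrightarrow> (\<lambda>k. f (x k) i) \<longlonglongrightarrow> f z i"
  shows "\<exists>z. (\<forall>j<n. 0 \<le> z j \<and> z j \<le> 1) \<and> (\<forall>i<n. f z i = z i)"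
proof -
  have "\<forall>k. \<exists>z. (\<forall>j<n. 0 \<le> z j \<and> z j \<le> 1) \<and> (\<forall>i<n. \<exists>u v. (\<forall>j<n. 0 \<le> u j \<and> u j \<le> 1 \<and> 0 \<le> v j \<and> v j \<le> 1
        \<and> \<bar>u j - z j\<bar> \<le> 1/real (Suc k) \<and> \<bar>v j - z j\<bar> \<le> 1/real (Suc k)) \<and> u i \<le> f u i \<and> f v i \<le> v i)"
  proof
    fix k
    show "\<exists>z. (\<forall>j<n. 0 \<le> z j \<and> z j \<le> 1) \<and> (\<forall>i<n. \<exists>u v. (\<forall>j<n. 0 \<le> u j \<and> u j \<le> 1 \<and> 0 \<le> v j \<and> v j \<le> 1
        \<and> \<bar>u j - z j\<bar> \<le> 1/real (Suc k) \<and> \<bar>v j - z j\<bar> \<le> 1/real (Suc k)) \<and> u i \<le> f u i \<and> f v i \<le> v i)"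
      by (rule kuhn_approx[where p="Suc k"]) (use fC in auto)
  qed
  then obtain Z where Z: "\<forall>k. (\<forall>j<n. 0 \<le> Z k j \<and> Z k j \<le> 1) \<and> (\<forall>i<n. \<exists>u v. (\<forall>j<n. 0 \<le> u j \<and> u j \<le> 1 \<and> 0 \<le> v j \<and> v j \<le> 1
        \<and> \<bar>u j - Z k j\<bar> \<le> 1/real (Suc k) \<and> \<bar>v j - Z k j\<bar> \<le> 1/real (Suc k)) \<and> u i \<le> f u i \<and> f v i \<le> v i)"
    by metis
  have "\<forall>k i. \<exists>u. i<n \<longrightarrow> (\<forall>j<n. 0 \<le> u j \<and> u j \<le> 1 \<and> \<bar>u j - Z k j\<bar> \<le> 1/real (Suc k)) \<and> u i \<le> f u i"
    using Z by metis
  then obtain U where U: "\<forall>k i. i<n \<longrightarrow> (\<forall>j<n. 0 \<le> U k i j \<and> U k i j \<le> 1 \<and> \<bar>U k i j - Z k j\<bar> \<le> 1/real (Suc k)) \<and> U k i i \<le> f (U k i) i"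
    by metis
  have "\<forall>k i. \<exists>v. i<n \<longrightarrow> (\<forall>j<n. 0 \<le> v j \<and> v j \<le> 1 \<and> \<bar>v j - Z k j\<bar> \<le> 1/real (Suc k)) \<and> f v i \<le> v i"
    using Z by metis
  then obtain V where V: "\<forall>k i. i<n \<longrightarrow> (\<forall>j<n. 0 \<le> V k i j \<and> V k i j \<le> 1 \<and> \<bar>V k i j - Z k j\<bar> \<le> 1/real (Suc k)) \<and> f (V k i) i \<le> V k i i"
    by metis
  obtain \<sigma> where sg: "strict_mono \<sigma>" "\<forall>j<n. convergent (\<lambda>k. Z (\<sigma> k) j)"
    using subseq_conv[of n Z n] Z by auto
  define z where "z j = lim (\<lambda>k. Z (\<sigma> k) j)" for j
  have zl: "(\<lambda>k. Z (\<sigma> k) j) \<longlonglongrightarrow> z j" if "j<n" for j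
    using sg(2) that by (simp add: z_def convergent_LIMSEQ_iff)
  have zC: "\<forall>j<n. 0 \<le> z j \<and> z j \<le> 1"
  proof (intro allI impI conjI)
    fix j assume j: "j<n"
    show "0 \<le> z j" by (rule LIMSEQ_le_const[OF zl[OF j]]) (use Z j in auto)
    show "z j \<le> 1" by (rule LIMSEQ_le_const2[OF zl[OF j]]) (use Z j in auto)
  qed
  have inv0: "(\<lambda>k. 1 / real (Suc (\<sigma> k))) \<longlonglongrightarrow> 0"
    using LIMSEQ_subseq_LIMSEQ[OF LIMSEQ_inverse_real_of_nat sg(1)] by (simp add: o_def inverse_eq_divide)
  have near: "(\<lambda>k. W k j) \<longlonglongrightarrow> z j"
    if W: "\<forall>k. \<bar>W k j - Z (\<sigma> k) j\<bar> \<le> 1/real (Suc (\<sigma> k))" and j: "j<n" for W j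
  proof -
    have "(\<lambda>k. W k j - Z (\<sigma> k) j) \<longlonglongrightarrow> 0"
      by (rule Lim_null_comparison[OF _ inv0]) (use W in auto)
    from tendsto_add[OF this zl[OF j]] show ?thesis by simp
  qed
  have "f z i = z i" if i: "i<n" for i
  proof -
    have Ul: "\<forall>j<n. (\<lambda>k. U (\<sigma> k) i j) \<longlonglongrightarrow> z j"
      using U i by (auto intro!: near)
    have Vl: "\<forall>j<n. (\<lambda>k. V (\<sigma> k) i j) \<longlonglongrightarrow> z j"
      using V i by (auto intro!: near)
    have fU: "(\<lambda>k. f (U (\<sigma> k) i) i) \<longlonglongrightarrow> f z i"
      by (rule cont[OF _ zC Ul i]) (use U i in auto)
    have fV: "(\<lambda>k. f (V (\<sigma> k) i) i) \<longlonglongrightarrow> f z i"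
      by (rule cont[OF _ zC Vl i]) (use V i in auto)
    have "z i \<le> f z i"
      by (rule LIMSEQ_le[OF Ul[rule_format, OF i] fU]) (use U i in auto)
    moreover have "f z i \<le> z i"
      by (rule LIMSEQ_le[OF fV Vl[rule_format, OF i]]) (use V i in auto)
    ultimately show ?thesis by simp
  qed
  then show ?thesis using zC by blast
qed

definition Kof :: "nat \<Rightarrow> (nat \<Rightarrow> real) \<Rightarrow> (nat \<Rightarrow> real) \<Rightarrow> nat \<Rightarrow> (nat \<Rightarrow> real) \<Rightarrow> real" where
  "Kof n dmax ell i d = (\<Sum>j\<in>{..<n} - {i}. (1 - d j / dmax j) * (ell j)\<^sup>2)"
definition Rof :: "nat \<Rightarrow> nat \<Rightarrow> (nat \<Rightarrow> real) \<Rightarrow> real" where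
  "Rof n i d = (\<Sum>j\<in>{..<n} - {i}. d j)"
definition BR where
  "BR n dmax eps xi ell theta i d = max 0 (min (dmax i)
     (1 / (xi i * ell i + theta i * Kof n dmax ell i d) - (Rof n i d + eps i)))"

lemma ln_lower: "(u::real) > 0 \<Longrightarrow> 1 - 1/u \<le> ln u"
  using ln_le_minus_one[of "1/u"] by (simp add: ln_div)

lemma br_opt:
  fixes A c M x :: real
  assumes A: "A > 0" and c: "c > 0" and M: "M \<ge> 0" and x: "0 \<le> x" "x \<le> M"
  defines "b \<equiv> max 0 (min M (1/c - A))"
  shows "ln (A + x) - c * x \<le> ln (A + b) - c * b"
proof -
  have b0: "0 \<le> b" "b \<le> M" using M by (auto simp: b_def)
  have Ab: "A + b > 0" "A + x > 0" using A b0 x by auto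
  have key: "ln (A + b) - ln (A + x) \<ge> (b - x) / (A + b)"
  proof -
    have "ln ((A + b)/(A + x)) \<ge> 1 - 1/((A+b)/(A+x))"
      by (rule ln_lower) (use Ab in simp)
    moreover have "1 - 1/((A+b)/(A+x)) = (b - x)/(A+b)" using Ab by (simp add: field_simps)
    moreover have "ln ((A + b)/(A + x)) = ln (A + b) - ln (A + x)" using Ab by (simp add: ln_div)
    ultimately show ?thesis by simp
  qed
  show ?thesis
  proof (cases "x \<le> b")
    case True
    show ?thesis
    proof (cases "b = x")
      case False
      then have "b > 0" using True b0 x by auto
      then have "b \<le> 1/c - A" unfolding b_def by (auto simp: max_def min_def split: if_splits)
      then have "A + b \<le> 1/c" by simp
      then have "c \<le> 1/(A+b)" using c Ab by (simp add: field_simps)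
      then have "c * (b - x) \<le> (1/(A+b)) * (b - x)" using True by (intro mult_right_mono) auto
      then have "c * (b - x) \<le> (b - x) / (A+b)" by simp
      then show ?thesis using key by (simp add: algebra_simps)
    qed simp
  next
    case False
    then have "b < M" using x by simp
    then have "b \<ge> 1/c - A" unfolding b_def by (auto simp: max_def min_def split: if_splits)
    then have "A + b \<ge> 1/c" by simp
    then have "1/(A+b) \<le> c" using c Ab by (simp add: field_simps)
    then have "(1/(A+b)) * (x - b) \<le> c * (x - b)" using False by (intro mult_right_mono) auto
    then have "(x - b) / (A+b) \<le> c * (x - b)" by simp
    moreover have "(x - b)/(A+b) = - ((b-x)/(A+b))" by (simp add: diff_divide_distrib)
    ultimately show ?thesis using key by (simp add: algebra_simps)
  qed
qed

lemma payoff_upd: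
  assumes i: "i < n"
  shows "payoff n dmax eps xi ell theta i (d(i:=x)) =
    ln (Rof n i d + x + eps i) - (xi i * ell i + theta i * Kof n dmax ell i d) * x"
proof -
  have s: "(\<Sum>j<n. (d(i:=x)) j) = x + Rof n i d"
  proof -
    have "(\<Sum>j<n. (d(i:=x)) j) = (d(i:=x)) i + (\<Sum>j\<in>{..<n} - {i}. (d(i:=x)) j)"
      using sum.remove[of "{..<n}" i "d(i:=x)"] i by simp
    also have "(\<Sum>j\<in>{..<n} - {i}. (d(i:=x)) j) = Rof n i d" unfolding Rof_def by (rule sum.cong) auto
    finally show ?thesis by simp
  qed
  have k: "(\<Sum>j\<in>{..<n} - {i}. (1 - (d(i:=x)) j / dmax j) * (ell j)\<^sup>2) = Kof n dmax ell i d"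
    unfolding Kof_def by (rule sum.cong) auto
  show ?thesis unfolding payoff_def s k by (simp add: algebra_simps)
qed

lemma nash_of_fixed:
  assumes vp: "valid_params n dmax eps xi ell theta"
    and dC: "\<forall>i<n. 0 \<le> d i \<and> d i \<le> dmax i"
    and fx: "\<forall>i<n. d i = BR n dmax eps xi ell theta i d"
  shows "nash_eq n dmax eps xi ell theta d"
  unfolding nash_eq_def
proof (intro conjI allI impI ballI)
  fix i assume i: "i<n"
  show "d i \<in> {0..dmax i}" using dC i by auto
  fix x :: real assume x: "x \<in> {0..dmax i}"
  have A: "Rof n i d + eps i > 0"
  proof -
    have "Rof n i d \<ge> 0" unfolding Rof_def using dC by (intro sum_nonneg) auto
    then show ?thesis using vp i by (auto simp: valid_params_def)
  qed
  have c: "xi i * ell i + theta i * Kof n dmax ell i d > 0"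
  proof -
    have "Kof n dmax ell i d \<ge> 0" unfolding Kof_def
    proof (intro sum_nonneg)
      fix j assume "j \<in> {..<n} - {i}"
      then have j: "j<n" by auto
      have "d j / dmax j \<le> 1" using dC vp j by (auto simp: valid_params_def divide_le_eq_1)
      then show "0 \<le> (1 - d j / dmax j) * (ell j)\<^sup>2" by simp
    qed
    moreover have "xi i * ell i > 0" "theta i \<ge> 0" using vp i by (auto simp: valid_params_def)
    ultimately show ?thesis by (simp add: add_pos_nonneg)
  qed
  have M: "dmax i \<ge> 0" using vp i by (auto simp: valid_params_def less_imp_le)
  have "payoff n dmax eps xi ell theta i (d(i:=x)) \<le> payoff n dmax eps xi ell theta i (d(i:=d i))"
  proof -
    have e1: "Rof n i d + x + eps i = (Rof n i d + eps i) + x" "Rof n i d + d i + eps i = (Rof n i d + eps i) + d i" by simp_all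
    have "d i = max 0 (min (dmax i) (1 / (xi i * ell i + theta i * Kof n dmax ell i d) - (Rof n i d + eps i)))"
      using fx i by (simp add: BR_def)
    then show ?thesis unfolding payoff_upd[OF i] e1 using br_opt[OF A c M, of x] x by simp
  qed
  then show "payoff n dmax eps xi ell theta i (d(i:=x)) \<le> payoff n dmax eps xi ell theta i d" by simp
qed

lemma c_pos:
  assumes vp: "valid_params n dmax eps xi ell theta"
    and dC: "\<forall>j<n. 0 \<le> d j \<and> d j \<le> dmax j" and i: "i<n"
  shows "xi i * ell i + theta i * Kof n dmax ell i d > 0"
proof -
  have "Kof n dmax ell i d \<ge> 0" unfolding Kof_def
  proof (intro sum_nonneg)
    fix j assume "j \<in> {..<n} - {i}"
    then have j: "j<n" by auto
    have "d j / dmax j \<le> 1" using dC vp j by (auto simp: valid_params_def divide_le_eq_1)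
    then show "0 \<le> (1 - d j / dmax j) * (ell j)\<^sup>2" by simp
  qed
  moreover have "xi i * ell i > 0" "theta i \<ge> 0" using vp i by (auto simp: valid_params_def)
  ultimately show ?thesis by (simp add: add_pos_nonneg)
qed

lemma exists_nash:
  assumes vp: "valid_params n dmax eps xi ell theta"
  shows "\<exists>d. nash_eq n dmax eps xi ell theta d"
proof -
  define D where "D x = (\<lambda>j. dmax j * x j)" for x :: "nat\<Rightarrow>real"
  define f where "f x i = BR n dmax eps xi ell theta i (D x) / dmax i" for x i
  have dpos: "dmax j > 0" if "j<n" for j using vp that by (auto simp: valid_params_def)
  have BRr: "0 \<le> BR n dmax eps xi ell theta i d \<and> BR n dmax eps xi ell theta i d \<le> dmax i" if "i<n" for i d
    using dpos[OF that] by (auto simp: BR_def)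
  have DC: "\<forall>j<n. 0 \<le> D x j \<and> D x j \<le> dmax j" if "\<forall>j<n. 0 \<le> x j \<and> x j \<le> 1" for x
  proof (intro allI impI)
    fix j assume j: "j<n"
    have "0 < dmax j" "0 \<le> x j" "x j \<le> 1" using dpos[OF j] that j by auto
    then show "0 \<le> D x j \<and> D x j \<le> dmax j" by (simp add: D_def mult_le_cancel_left1)
  qed
  have fC: "0 \<le> f x i \<and> f x i \<le> 1" if "i<n" for x i
    using BRr[OF that] dpos[OF that] by (auto simp: f_def divide_le_eq_1)
  have cont: "(\<lambda>k. f (x k) i) \<longlonglongrightarrow> f z i"
    if xC: "\<forall>k. \<forall>j<n. 0 \<le> x k j \<and> x k j \<le> 1" and zC: "\<forall>j<n. 0 \<le> z j \<and> z j \<le> 1"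
      and cv: "\<forall>j<n. (\<lambda>k. x k j) \<longlonglongrightarrow> z j" and i: "i<n" for x z i
  proof -
    have Kc: "(\<lambda>k. Kof n dmax ell i (D (x k))) \<longlonglongrightarrow> Kof n dmax ell i (D z)"
      unfolding Kof_def D_def
      by (rule tendsto_sum) (use cv in \<open>auto intro!: tendsto_intros\<close>)
    have Rc: "(\<lambda>k. Rof n i (D (x k))) \<longlonglongrightarrow> Rof n i (D z)"
      unfolding Rof_def D_def
      by (rule tendsto_sum) (use cv in \<open>auto intro!: tendsto_intros\<close>)
    have cz: "xi i * ell i + theta i * Kof n dmax ell i (D z) \<noteq> 0"
      using c_pos[OF vp DC[OF zC] i] by simp
    have Cc: "(\<lambda>k. xi i * ell i + theta i * Kof n dmax ell i (D (x k))) \<longlonglongrightarrow> xi i * ell i + theta i * Kof n dmax ell i (D z)"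
      by (intro tendsto_add tendsto_const tendsto_mult Kc)
    have "(\<lambda>k. BR n dmax eps xi ell theta i (D (x k))) \<longlonglongrightarrow> BR n dmax eps xi ell theta i (D z)"
      unfolding BR_def
      by (intro tendsto_max tendsto_const tendsto_min tendsto_diff tendsto_divide Cc cz tendsto_add Rc)
    then show ?thesis unfolding f_def by (intro tendsto_divide tendsto_const) (use dpos[OF i] in auto)
  qed
  obtain z where zC: "\<forall>j<n. 0 \<le> z j \<and> z j \<le> 1" and fz: "\<forall>i<n. f z i = z i"
    using brouwer_nat[of n f] fC cont by blast
  have "nash_eq n dmax eps xi ell theta (D z)"
  proof (rule nash_of_fixed[OF vp DC[OF zC]], intro allI impI)
    fix i assume i: "i<n"
    have "BR n dmax eps xi ell theta i (D z) / dmax i = z i" using fz i by (simp add: f_def)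
    then show "D z i = BR n dmax eps xi ell theta i (D z)" using dpos[OF i] by (simp add: D_def field_simps)
  qed
  then show ?thesis by blast
qed

lemma example_multi:
  "\<exists>n dmax eps xi ell theta. n \<ge> 2 \<and> valid_params n dmax eps xi ell theta \<and>
            (\<exists>d d'. nash_eq n dmax eps xi ell theta d \<and> nash_eq n dmax eps xi ell theta d' \<and>
                    (\<exists>i<n. d i \<noteq> d' i))"
proof -
  let ?n = "2::nat" and ?o = "\<lambda>_::nat. 1::real" and ?xi = "\<lambda>_::nat. 1/10::real"
  have vp: "valid_params ?n ?o ?o ?xi ?o ?o" by (simp add: valid_params_def)
  have card1: "card ({..<?n} - {i}) = 1" if "i < ?n" for i
    using that by (simp add: card_Diff_singleton)
  have n1: "nash_eq ?n ?o ?o ?xi ?o ?o (\<lambda>_. 1)"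
  proof (rule nash_of_fixed[OF vp], simp, intro allI impI)
    fix i assume i: "i < ?n"
    show "1 = BR ?n ?o ?o ?xi ?o ?o i (\<lambda>_. 1)"
      using card1[OF i] by (simp add: BR_def Kof_def Rof_def)
  qed
  have n0: "nash_eq ?n ?o ?o ?xi ?o ?o (\<lambda>_. 0)"
  proof (rule nash_of_fixed[OF vp], simp, intro allI impI)
    fix i assume i: "i < ?n"
    show "0 = BR ?n ?o ?o ?xi ?o ?o i (\<lambda>_. 0)"
      using card1[OF i] by (simp add: BR_def Kof_def Rof_def)
  qed
  show ?thesis
    apply (rule exI[of _ ?n], rule exI[of _ ?o], rule exI[of _ ?o], rule exI[of _ ?xi], rule exI[of _ ?o], rule exI[of _ ?o])
    using vp n1 n0 by (intro conjI exI[of _ "\<lambda>_::nat. 1::real"] exI[of _ "\<lambda>_::nat. 0::real"] exI[of _ "0::nat"]) auto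
qed

theorem lemma2:
  shows "(\<forall>n dmax eps xi ell theta. n \<ge> 2 \<and> valid_params n dmax eps xi ell theta \<longrightarrow>
            (\<exists>d. nash_eq n dmax eps xi ell theta d))
       \<and> (\<exists>n dmax eps xi ell theta. n \<ge> 2 \<and> valid_params n dmax eps xi ell theta \<and>
            (\<exists>d d'. nash_eq n dmax eps xi ell theta d \<and> nash_eq n dmax eps xi ell theta d' \<and>
                    (\<exists>i<n. d i \<noteq> d' i)))"
  using exists_nash example_multi by blast

end
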